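(* Let $\mathcal{X}$ and $\mathcal{Y}$ be directed spaces and let $f:\mathcal{X}\to\mathcal{Y}$ be a morphism of directed spaces admitting an inverse morphism of directed spaces $g:\mathcal{Y}\to\mathcal{X}$ (i.e. $f\circ g=\mathrm{Id}$, $g\circ f=\mathrm{Id}$). Then for every $n\geq 1$, the natural homology functors $\overrightarrow{H}_n(\mathcal{X}):F\overrightarrow{P}(\mathcal{X})\to\mathbf{Ab}$ and $\overrightarrow{H}_n(\mathcal{Y}):F\overrightarrow{P}(\mathcal{Y})\to\mathbf{Ab}$ are bisimulation equivalent.
   Context: A directed space $\mathcal{X}=(X,dX)$ is a topological space $X$ with a set $dX$ of continuous paths $[0,1]\to X$ (dipaths) containing all constant paths, closed under monotone reparametrization (precomposition with continuous monotone $\varphi:[0,1]\to[0,1]$ with $\varphi(0)=0,\varphi(1)=1$) and under concatenation $\star$. A morphism of directed spaces is a continuous map sending dipaths to dipaths. A trace is the class of a dipath modulo monotone reparametrization; concatenation of traces is induced by that of dipaths. The trace space $\overrightarrow{T}(\mathcal{X})(x,y)$ is the space of dipaths from $x$ to $y$ (compact-open topology) modulo reparametrization, with quotient topology. The trace category $\overrightarrow{P}(\mathcal{X})$ has objects the points of $X$, morphisms the traces, composition by concatenation. For a category $\mathcal{C}$, its factorization category $F\mathcal{C}$ has objects the morphisms of $\mathcal{C}$, and a morphism $f\to f'$ is a pair $(u,v)$ of morphisms with $u f v=f'$ (in concatenation order), composition $(u,v)(u',v')=(u'u,vv')$. For $n\geq1$, the natural homology $\overrightarrow{H}_n(\mathcal{X}):F\overrightarrow{P}(\mathcal{X})\to\mathbf{Ab}$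 sends a trace $f$ from $x$ to $y$ to $H_{n-1}(\overrightarrow{T}(\mathcal{X})(x,y))$ (singular homology) and a morphism $(u,v)$ to the map induced by $h\mapsto u\star h\star v$. Given small categories $A,B$ and functors $F:A\to\mathbf{Ab}$, $G:B\to\mathbf{Ab}$, a bisimulation is a set $R$ of triples $(a,\eta,b)$, $a$ an object of $A$, $b$ an object of $B$, $\eta:Fa\to Gb$ an isomorphism, such that (i) every object of $A$ and every object of $B$ occurs in some triple of $R$; (ii) for every $(a,\eta,b)\in R$ and morphism $i:a\to a'$ of $A$ there are $(a',\eta',b')\in R$ and $j:b\to b'$ in $B$ with $\eta'\circ Fi=Gj\circ\eta$, and symmetrically for every $j:b\to b'$ in $B$ there are $(a',\eta',b')\in R$ and $i:a\to a'$ with $\eta'\circ Fi=Gj\circ\eta$. $F$ and $G$ are bisimulation equivalent if such an $R$ exists. *)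

theory Defs
  imports "HOL-Analysis.Analysis" "HOL-Homology.Homology"
begin

text \<open>Convention: a path is a function real => 'a that is extensional
  outside [0,1] (value undefined there), continuous on [0,1].\<close>

definition unit_interval :: "real topology" where
  "unit_interval = subtopology euclideanreal {0..1}"

definition is_path_in :: "'a topology \<Rightarrow> (real \<Rightarrow> 'a) \<Rightarrow> bool" where
  "is_path_in X p \<longleftrightarrow> p \<in> extensional {0..1} \<and> continuous_map unit_interval X p"

definition const_path :: "'a \<Rightarrow> real \<Rightarrow> 'a" where
  "const_path x = restrict (\<lambda>_. x) {0..1}"

definition reparametrization :: "(real \<Rightarrow> real) \<Rightarrow> bool" where
  "reparametrization \<phi> \<longleftrightarrow> continuous_on {0..1} \<phi> \<and> mono_on {0..1} \<phi> \<and>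
     \<phi> ` {0..1} \<subseteq> {0..1} \<and> \<phi> 0 = 0 \<and> \<phi> 1 = 1"

definition reparam :: "(real \<Rightarrow> 'a) \<Rightarrow> (real \<Rightarrow> real) \<Rightarrow> real \<Rightarrow> 'a" where
  "reparam p \<phi> = restrict (p \<circ> \<phi>) {0..1}"

definition path_concat :: "(real \<Rightarrow> 'a) \<Rightarrow> (real \<Rightarrow> 'a) \<Rightarrow> real \<Rightarrow> 'a" where
  "path_concat p q = restrict (\<lambda>t. if t \<le> 1/2 then p (2 * t) else q (2 * t - 1)) {0..1}"

definition dspace :: "'a topology \<Rightarrow> (real \<Rightarrow> 'a) set \<Rightarrow> bool" where
  "dspace X dX \<longleftrightarrow>
     (\<forall>p\<in>dX. is_path_in X p) \<and>
     (\<forall>x\<in>topspace X. const_path x \<in> dX) \<and>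
     (\<forall>p\<in>dX. \<forall>\<phi>. reparametrization \<phi> \<longrightarrow> reparam p \<phi> \<in> dX) \<and>
     (\<forall>p\<in>dX. \<forall>q\<in>dX. p 1 = q 0 \<longrightarrow> path_concat p q \<in> dX)"

definition dmap :: "'a topology \<Rightarrow> (real \<Rightarrow> 'a) set \<Rightarrow> 'b topology \<Rightarrow> (real \<Rightarrow> 'b) set
     \<Rightarrow> ('a \<Rightarrow> 'b) \<Rightarrow> bool" where
  "dmap X dX Y dY f \<longleftrightarrow> continuous_map X Y f \<and>
     (\<forall>p\<in>dX. restrict (f \<circ> p) {0..1} \<in> dY)"

definition reparam_rel :: "(real \<Rightarrow> 'a) set \<Rightarrow> (real \<Rightarrow> 'a) \<Rightarrow> (real \<Rightarrow> 'a) \<Rightarrow> bool" where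
  "reparam_rel dX p q \<longleftrightarrow> p \<in> dX \<and> (\<exists>\<phi>. reparametrization \<phi> \<and> q = reparam p \<phi>)"

definition trace_of :: "(real \<Rightarrow> 'a) set \<Rightarrow> (real \<Rightarrow> 'a) \<Rightarrow> (real \<Rightarrow> 'a) set" where
  "trace_of dX p = {q \<in> dX. equivclp (reparam_rel dX) p q}"

definition traces :: "(real \<Rightarrow> 'a) set \<Rightarrow> (real \<Rightarrow> 'a) set set" where
  "traces dX = trace_of dX ` dX"

definition trace_src :: "(real \<Rightarrow> 'a) set \<Rightarrow> 'a" where
  "trace_src t = (SOME p. p \<in> t) 0"

definition trace_tgt :: "(real \<Rightarrow> 'a) set \<Rightarrow> 'a" where
  "trace_tgt t = (SOME p. p \<in> t) 1"

definition trace_concat :: "(real \<Rightarrow> 'a) set \<Rightarrow> (real \<Rightarrow> 'a) set \<Rightarrow> (real \<Rightarrow> 'a) set \<Rightarrow> (real \<Rightarrow> 'a) set" where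
  "trace_concat dX s t = trace_of dX (path_concat (SOME p. p \<in> s) (SOME q. q \<in> t))"

definition compact_open_topology :: "'a topology \<Rightarrow> (real \<Rightarrow> 'a) set \<Rightarrow> (real \<Rightarrow> 'a) topology" where
  "compact_open_topology X P = topology_generated_by
     {{p \<in> P. p ` K \<subseteq> U} | K U. compactin unit_interval K \<and> openin X U}"

definition quotient_topology :: "'a topology \<Rightarrow> ('a \<Rightarrow> 'b) \<Rightarrow> 'b topology" where
  "quotient_topology T q = topology (\<lambda>U. U \<subseteq> q ` topspace T \<and> openin T {x \<in> topspace T. q x \<in> U})"

definition dipaths_from_to :: "(real \<Rightarrow> 'a) set \<Rightarrow> 'a \<Rightarrow> 'a \<Rightarrow> (real \<Rightarrow> 'a) set" where
  "dipaths_from_to dX x y = {p \<in> dX. p 0 = x \<and> p 1 = y}"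

definition trace_space :: "'a topology \<Rightarrow> (real \<Rightarrow> 'a) set \<Rightarrow> 'a \<Rightarrow> 'a \<Rightarrow> (real \<Rightarrow> 'a) set topology" where
  "trace_space X dX x y =
     quotient_topology (compact_open_topology X (dipaths_from_to dX x y)) (trace_of dX)"

definition fact_hom :: "(real \<Rightarrow> 'a) set \<Rightarrow> (real \<Rightarrow> 'a) set \<Rightarrow> (real \<Rightarrow> 'a) set
     \<Rightarrow> ((real \<Rightarrow> 'a) set \<times> (real \<Rightarrow> 'a) set) set" where
  "fact_hom dX f f' = {(u, v). u \<in> traces dX \<and> v \<in> traces dX \<and>
       trace_tgt u = trace_src f \<and> trace_tgt f = trace_src v \<and>
       trace_concat dX (trace_concat dX u f) v = f'}"

definition nat_hom_obj :: "nat \<Rightarrow> 'a topology \<Rightarrow> (real \<Rightarrow> 'a) set \<Rightarrow> (real \<Rightarrow> 'a) set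
     \<Rightarrow> (real \<Rightarrow> 'a) set chain set monoid" where
  "nat_hom_obj n X dX f = homology_group (int n - 1) (trace_space X dX (trace_src f) (trace_tgt f))"

definition nat_hom_mor :: "nat \<Rightarrow> 'a topology \<Rightarrow> (real \<Rightarrow> 'a) set \<Rightarrow> (real \<Rightarrow> 'a) set
     \<Rightarrow> (real \<Rightarrow> 'a) set \<Rightarrow> (real \<Rightarrow> 'a) set \<times> (real \<Rightarrow> 'a) set
     \<Rightarrow> (real \<Rightarrow> 'a) set chain set \<Rightarrow> (real \<Rightarrow> 'a) set chain set" where
  "nat_hom_mor n X dX f f' uv =
     hom_induced (int n - 1)
       (trace_space X dX (trace_src f) (trace_tgt f)) {}
       (trace_space X dX (trace_src f') (trace_tgt f')) {}
       (\<lambda>h. trace_concat dX (trace_concat dX (fst uv) h) (snd uv))"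

text \<open>A functor F : A -> Ab is given by its object set A, hom-sets HomA,
  object part F and morphism part Fm (Fm a a' i : F a -> F a').\<close>

definition bisimulation ::
  "'a set \<Rightarrow> ('a \<Rightarrow> 'a \<Rightarrow> 'm set) \<Rightarrow> ('a \<Rightarrow> 'x monoid) \<Rightarrow> ('a \<Rightarrow> 'a \<Rightarrow> 'm \<Rightarrow> 'x \<Rightarrow> 'x) \<Rightarrow>
   'b set \<Rightarrow> ('b \<Rightarrow> 'b \<Rightarrow> 'n set) \<Rightarrow> ('b \<Rightarrow> 'y monoid) \<Rightarrow> ('b \<Rightarrow> 'b \<Rightarrow> 'n \<Rightarrow> 'y \<Rightarrow> 'y) \<Rightarrow>
   ('a \<times> ('x \<Rightarrow> 'y) \<times> 'b) set \<Rightarrow> bool" where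
  "bisimulation A HomA F Fm B HomB G Gm R \<longleftrightarrow>
     (\<forall>(a, \<eta>, b) \<in> R. a \<in> A \<and> b \<in> B \<and> \<eta> \<in> iso (F a) (G b)) \<and>
     (\<forall>a\<in>A. \<exists>\<eta> b. (a, \<eta>, b) \<in> R) \<and>
     (\<forall>b\<in>B. \<exists>a \<eta>. (a, \<eta>, b) \<in> R) \<and>
     (\<forall>(a, \<eta>, b) \<in> R. \<forall>a'\<in>A. \<forall>i\<in>HomA a a'.
        \<exists>\<eta>' b' j. (a', \<eta>', b') \<in> R \<and> j \<in> HomB b b' \<and>
          (\<forall>c\<in>carrier (F a). \<eta>' (Fm a a' i c) = Gm b b' j (\<eta> c))) \<and>
     (\<forall>(a, \<eta>, b) \<in> R. \<forall>b'\<in>B. \<forall>j\<in>HomB b b'.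
        \<exists>\<eta>' a' i. (a', \<eta>', b') \<in> R \<and> i \<in> HomA a a' \<and>
          (\<forall>c\<in>carrier (F a). \<eta>' (Fm a a' i c) = Gm b b' j (\<eta> c)))"

definition bisim_equivalent ::
  "'a set \<Rightarrow> ('a \<Rightarrow> 'a \<Rightarrow> 'm set) \<Rightarrow> ('a \<Rightarrow> 'x monoid) \<Rightarrow> ('a \<Rightarrow> 'a \<Rightarrow> 'm \<Rightarrow> 'x \<Rightarrow> 'x) \<Rightarrow>
   'b set \<Rightarrow> ('b \<Rightarrow> 'b \<Rightarrow> 'n set) \<Rightarrow> ('b \<Rightarrow> 'y monoid) \<Rightarrow> ('b \<Rightarrow> 'b \<Rightarrow> 'n \<Rightarrow> 'y \<Rightarrow> 'y) \<Rightarrow> bool" where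
  "bisim_equivalent A HomA F Fm B HomB G Gm \<longleftrightarrow>
     (\<exists>R. bisimulation A HomA F Fm B HomB G Gm R)"

end

theory Submission
  imports Defs
begin

lemma reparam_ends:
  assumes "reparametrization \<phi>"
  shows "reparam p \<phi> 0 = p 0" "reparam p \<phi> 1 = p 1"
  using assms by (auto simp: reparam_def reparametrization_def)

lemma rr_in:
  assumes "dspace X dX" "reparam_rel dX p q"
  shows "p \<in> dX \<and> q \<in> dX \<and> q 0 = p 0 \<and> q 1 = p 1"
  using assms reparam_ends unfolding reparam_rel_def dspace_def by metis

lemma eqv_in:
  assumes "dspace X dX" "equivclp (reparam_rel dX) p q" "p \<in> dX"
  shows "q \<in> dX \<and> q 0 = p 0 \<and> q 1 = p 1"
  using assms(2)
proof (induction rule: equivclp_induct)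
  case base
  then show ?case using assms by auto
next
  case (step y z)
  then show ?case using rr_in[OF assms(1)] by metis
qed

lemma trace_of_self: "p \<in> dX \<Longrightarrow> p \<in> trace_of dX p"
  by (simp add: trace_of_def)

lemma trace_of_eq: "equivclp (reparam_rel dX) a b \<Longrightarrow> trace_of dX a = trace_of dX b"
  unfolding trace_of_def by (blast intro: equivclp_trans equivclp_sym)

lemma trace_of_mem_eq: "q \<in> trace_of dX p \<Longrightarrow> trace_of dX q = trace_of dX p"
  unfolding trace_of_def by (blast intro: equivclp_trans equivclp_sym)

lemma some_in_trace:
  assumes "p \<in> dX"
  shows "(SOME r. r \<in> trace_of dX p) \<in> trace_of dX p"
proof -
  have "\<exists>r. r \<in> trace_of dX p" using trace_of_self[OF assms] by blast
  then show ?thesis by (rule someI_ex)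
qed

lemma trace_mem_ends:
  assumes "dspace X dX" "p \<in> dX" "q \<in> trace_of dX p"
  shows "q \<in> dX \<and> q 0 = p 0 \<and> q 1 = p 1"
  using assms eqv_in unfolding trace_of_def by blast

lemma trace_src_of: "dspace X dX \<Longrightarrow> p \<in> dX \<Longrightarrow> trace_src (trace_of dX p) = p 0"
  unfolding trace_src_def using trace_mem_ends some_in_trace by blast

lemma trace_tgt_of: "dspace X dX \<Longrightarrow> p \<in> dX \<Longrightarrow> trace_tgt (trace_of dX p) = p 1"
  unfolding trace_tgt_def using trace_mem_ends some_in_trace by blast

definition psiL :: "(real \<Rightarrow> real) \<Rightarrow> real \<Rightarrow> real" where
  "psiL \<phi> = (\<lambda>t. if t \<le> 1/2 then \<phi> (2*t) / 2 else t)"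

definition psiR :: "(real \<Rightarrow> real) \<Rightarrow> real \<Rightarrow> real" where
  "psiR \<phi> = (\<lambda>t. if t \<le> 1/2 then t else (\<phi> (2*t-1) + 1) / 2)"

lemma reparam_range: "reparametrization \<phi> \<Longrightarrow> t \<in> {0..1} \<Longrightarrow> \<phi> t \<in> {0..1}"
  unfolding reparametrization_def by (auto simp: image_subset_iff)

lemma psiL_rep:
  assumes "reparametrization \<phi>"
  shows "reparametrization (psiL \<phi>)"
proof -
  have c: "continuous_on {0..1} \<phi>" and m: "mono_on {0..1} \<phi>" and r: "\<phi> ` {0..1} \<subseteq> {0..1}"
    and e: "\<phi> 0 = 0" "\<phi> 1 = 1"
    using assms unfolding reparametrization_def by auto
  have c1: "continuous_on {t \<in> {0..1}. t \<le> 1/2} (\<lambda>t. \<phi> (2*t) / 2)"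
  proof -
    have "continuous_on {t \<in> {0..1}. t \<le> 1/2} (\<lambda>t. 2*t::real)"
      by (intro continuous_intros)
    moreover have "(\<lambda>t. 2*t) ` {t \<in> {0..1::real}. t \<le> 1/2} \<subseteq> {0..1}" by auto
    ultimately have "continuous_on {t \<in> {0..1}. t \<le> 1/2} (\<lambda>t. \<phi> (2*t))"
      using continuous_on_compose2[OF c] by blast
    then show ?thesis by (intro continuous_intros) auto
  qed
  have c2: "continuous_on {t \<in> {0..1::real}. 1/2 \<le> t} (\<lambda>t. t)" by (intro continuous_intros)
  have "continuous_on {0..1} (psiL \<phi>)"
    unfolding psiL_def
  proof (rule continuous_on_cases_le[OF c1 c2])
    show "continuous_on {0..1} (\<lambda>x::real. x)" by (intro continuous_intros)
    fix x :: real assume "x = 1/2"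
    then show "\<phi> (2*x) / 2 = x" unfolding \<open>x = 1/2\<close> using e by simp
  qed
  moreover have "mono_on {0..1} (psiL \<phi>)"
  proof (rule mono_onI)
    fix x y :: real assume xy: "x \<in> {0..1}" "y \<in> {0..1}" "x \<le> y"
    show "psiL \<phi> x \<le> psiL \<phi> y"
    proof (cases "y \<le> 1/2")
      case True
      then have "\<phi> (2*x) \<le> \<phi> (2*y)" using xy by (intro mono_onD[OF m]) auto
      then show ?thesis using True xy by (simp add: psiL_def)
    next
      case False
      have "\<phi> (2*x) \<le> 1" if "x \<le> 1/2" using reparam_range[OF assms, of "2*x"] that xy by auto
      then show ?thesis using False xy by (auto simp: psiL_def)
    qed
  qed
  moreover have "psiL \<phi> ` {0..1} \<subseteq> {0..1}"
  proof
    fix y assume "y \<in> psiL \<phi> ` {0..1}"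
    then obtain x where x: "x \<in> {0..1}" "y = psiL \<phi> x" by auto
    show "y \<in> {0..1}"
    proof (cases "x \<le> 1/2")
      case True
      then have "\<phi> (2*x) \<in> {0..1}" using reparam_range[OF assms, of "2*x"] x by auto
      then show ?thesis using x True by (auto simp: psiL_def)
    qed (use x in \<open>auto simp: psiL_def\<close>)
  qed
  ultimately show ?thesis using e unfolding reparametrization_def psiL_def by auto
qed

lemma psiR_rep:
  assumes "reparametrization \<phi>"
  shows "reparametrization (psiR \<phi>)"
proof -
  have c: "continuous_on {0..1} \<phi>" and m: "mono_on {0..1} \<phi>" and r: "\<phi> ` {0..1} \<subseteq> {0..1}"
    and e: "\<phi> 0 = 0" "\<phi> 1 = 1"
    using assms unfolding reparametrization_def by auto
  have c2: "continuous_on {t \<in> {0..1}. 1/2 \<le> t} (\<lambda>t. (\<phi> (2*t-1) + 1) / 2)"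
  proof -
    have "continuous_on {t \<in> {0..1}. 1/2 \<le> t} (\<lambda>t. 2*t-1::real)"
      by (intro continuous_intros)
    moreover have "(\<lambda>t. 2*t-1) ` {t \<in> {0..1::real}. 1/2 \<le> t} \<subseteq> {0..1}" by auto
    ultimately have "continuous_on {t \<in> {0..1}. 1/2 \<le> t} (\<lambda>t. \<phi> (2*t-1))"
      using continuous_on_compose2[OF c] by blast
    then show ?thesis by (intro continuous_intros) auto
  qed
  have c1: "continuous_on {t \<in> {0..1::real}. t \<le> 1/2} (\<lambda>t. t)" by (intro continuous_intros)
  have "continuous_on {0..1} (psiR \<phi>)"
    unfolding psiR_def
  proof (rule continuous_on_cases_le[OF c1 c2])
    show "continuous_on {0..1} (\<lambda>x::real. x)" by (intro continuous_intros)
    fix x :: real assume "x = 1/2"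
    then show "x = (\<phi> (2*x-1) + 1) / 2" unfolding \<open>x = 1/2\<close> using e by simp
  qed
  moreover have "mono_on {0..1} (psiR \<phi>)"
  proof (rule mono_onI)
    fix x y :: real assume xy: "x \<in> {0..1}" "y \<in> {0..1}" "x \<le> y"
    show "psiR \<phi> x \<le> psiR \<phi> y"
    proof (cases "x \<le> 1/2")
      case False
      then have "\<phi> (2*x-1) \<le> \<phi> (2*y-1)" using xy by (intro mono_onD[OF m]) auto
      then show ?thesis using False xy by (simp add: psiR_def)
    next
      case True
      have "\<phi> (2*y-1) \<ge> 0" if "\<not> y \<le> 1/2" using reparam_range[OF assms, of "2*y-1"] that xy by auto
      then show ?thesis using True xy by (auto simp: psiR_def)
    qed
  qed
  moreover have "psiR \<phi> ` {0..1} \<subseteq> {0..1}"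
  proof
    fix y assume "y \<in> psiR \<phi> ` {0..1}"
    then obtain x where x: "x \<in> {0..1}" "y = psiR \<phi> x" by auto
    show "y \<in> {0..1}"
    proof (cases "x \<le> 1/2")
      case False
      then have "\<phi> (2*x-1) \<in> {0..1}" using reparam_range[OF assms, of "2*x-1"] x by auto
      then show ?thesis using x False by (auto simp: psiR_def)
    qed (use x in \<open>auto simp: psiR_def\<close>)
  qed
  ultimately show ?thesis using e unfolding reparametrization_def psiR_def by auto
qed

lemma concat_reparamL:
  assumes "reparametrization \<phi>"
  shows "path_concat (reparam p \<phi>) q = reparam (path_concat p q) (psiL \<phi>)"
proof
  fix t :: real
  show "path_concat (reparam p \<phi>) q t = reparam (path_concat p q) (psiL \<phi>) t"
  proof (cases "t \<in> {0..1}")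
    case True
    show ?thesis
    proof (cases "t \<le> 1/2")
      case True
      then have "\<phi> (2*t) \<in> {0..1}" using reparam_range[OF assms, of "2*t"] \<open>t \<in> {0..1}\<close> by auto
      then show ?thesis using True \<open>t \<in> {0..1}\<close>
        by (auto simp: path_concat_def reparam_def psiL_def)
    next
      case False
      then have "psiL \<phi> t = t" by (simp add: psiL_def)
      then show ?thesis using False \<open>t \<in> {0..1}\<close>
        by (auto simp: path_concat_def reparam_def)
    qed
  next
    case False
    then show ?thesis by (simp add: path_concat_def reparam_def del: atLeastAtMost_iff)
  qed
qed

lemma concat_reparamR:
  assumes "reparametrization \<phi>" "p 1 = q 0"
  shows "path_concat p (reparam q \<phi>) = reparam (path_concat p q) (psiR \<phi>)"
proof
  fix t :: real
  show "path_concat p (reparam q \<phi>) t = reparam (path_concat p q) (psiR \<phi>) t"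
  proof (cases "t \<in> {0..1}")
    case True
    show ?thesis
    proof (cases "t \<le> 1/2")
      case False
      then have r: "\<phi> (2*t-1) \<in> {0..1}" using reparam_range[OF assms(1), of "2*t-1"] \<open>t \<in> {0..1}\<close> by auto
      show ?thesis
      proof (cases "\<phi> (2*t-1) = 0")
        case True
        then show ?thesis using False \<open>t \<in> {0..1}\<close> assms(2)
          by (auto simp: path_concat_def reparam_def psiR_def)
      next
        case nz: False
        then have "\<not> (\<phi> (2*t-1) + 1)/2 \<le> 1/2" using r by auto
        moreover have "psiR \<phi> t = (\<phi> (2*t-1) + 1)/2" using False by (simp add: psiR_def)
        moreover have "2 * psiR \<phi> t - 1 = \<phi> (2*t-1)" using False by (simp add: psiR_def field_simps)
        ultimately show ?thesis using False \<open>t \<in> {0..1}\<close> r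
          by (auto simp add: path_concat_def reparam_def)
      qed
    next
      case True
      then show ?thesis using \<open>t \<in> {0..1}\<close>
        by (auto simp: path_concat_def reparam_def psiR_def)
    qed
  next
    case False
    then show ?thesis by (simp add: path_concat_def reparam_def del: atLeastAtMost_iff)
  qed
qed

lemma concat_in: "dspace X dX \<Longrightarrow> p \<in> dX \<Longrightarrow> q \<in> dX \<Longrightarrow> p 1 = q 0 \<Longrightarrow> path_concat p q \<in> dX"
  unfolding dspace_def by blast

lemma congL:
  assumes d: "dspace X dX" and r: "reparam_rel dX p p'" and q: "q \<in> dX" and e: "p 1 = q 0"
  shows "reparam_rel dX (path_concat p q) (path_concat p' q)"
proof -
  obtain \<phi> where \<phi>: "reparametrization \<phi>" "p' = reparam p \<phi>" and p: "p \<in> dX"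
    using r unfolding reparam_rel_def by blast
  have eq: "path_concat p' q = reparam (path_concat p q) (psiL \<phi>)"
    using \<phi>(2) concat_reparamL[of \<phi> p q, OF \<phi>(1)] by simp
  show ?thesis unfolding reparam_rel_def
    by (intro conjI exI[of _ "psiL \<phi>"] concat_in[OF d p q e] psiL_rep[OF \<phi>(1)] eq)
qed

lemma congR:
  assumes d: "dspace X dX" and r: "reparam_rel dX q q'" and p: "p \<in> dX" and e: "p 1 = q 0"
  shows "reparam_rel dX (path_concat p q) (path_concat p q')"
proof -
  obtain \<phi> where \<phi>: "reparametrization \<phi>" "q' = reparam q \<phi>" and q: "q \<in> dX"
    using r unfolding reparam_rel_def by blast
  have eq: "path_concat p q' = reparam (path_concat p q) (psiR \<phi>)"
    using \<phi>(2) concat_reparamR[of \<phi> p q, OF \<phi>(1) e] by simp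
  show ?thesis unfolding reparam_rel_def
    by (intro conjI exI[of _ "psiR \<phi>"] concat_in[OF d p q e] psiR_rep[OF \<phi>(1)] eq)
qed

lemma eqvL:
  assumes d: "dspace X dX" and r: "equivclp (reparam_rel dX) p p'" and p: "p \<in> dX"
    and q: "q \<in> dX" and e: "p 1 = q 0"
  shows "equivclp (reparam_rel dX) (path_concat p q) (path_concat p' q)"
  using r
proof (induction rule: equivclp_induct)
  case base
  then show ?case by simp
next
  case (step y z)
  have y: "y \<in> dX" "y 1 = q 0" using eqv_in[OF d step(1) p] e by auto
  from step(2) show ?case
  proof
    assume "reparam_rel dX y z"
    then have "reparam_rel dX (path_concat y q) (path_concat z q)" using congL[OF d, of y z q] q y(2) by blast
    then show ?thesis using step(3) equivclp_into_equivclp by metis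
  next
    assume a: "reparam_rel dX z y"
    then have "z 1 = q 0" using rr_in[OF d a] y by auto
    then have "reparam_rel dX (path_concat z q) (path_concat y q)" using congL[OF d, of z y q] a q by blast
    then show ?thesis using step(3) equivclp_into_equivclp by metis
  qed
qed

lemma eqvR:
  assumes d: "dspace X dX" and r: "equivclp (reparam_rel dX) q q'" and p: "p \<in> dX"
    and q: "q \<in> dX" and e: "p 1 = q 0"
  shows "equivclp (reparam_rel dX) (path_concat p q) (path_concat p q')"
  using r
proof (induction rule: equivclp_induct)
  case base
  then show ?case by simp
next
  case (step y z)
  have y: "y \<in> dX" "p 1 = y 0" using eqv_in[OF d step(1) q] e by auto
  from step(2) show ?case
  proof
    assume "reparam_rel dX y z"
    then have "reparam_rel dX (path_concat p y) (path_concat p z)" using congR[OF d, of y z p] p y(2) by blast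
    then show ?thesis using step(3) equivclp_into_equivclp by metis
  next
    assume a: "reparam_rel dX z y"
    then have "p 1 = z 0" using rr_in[OF d a] y by auto
    then have "reparam_rel dX (path_concat p z) (path_concat p y)" using congR[OF d, of z y p] a p by blast
    then show ?thesis using step(3) equivclp_into_equivclp by metis
  qed
qed

lemma tc_rep:
  assumes d: "dspace X dX" and p0: "p0 \<in> dX" and q0: "q0 \<in> dX" and e: "p0 1 = q0 0"
  shows "trace_concat dX (trace_of dX p0) (trace_of dX q0) = trace_of dX (path_concat p0 q0)"
proof -
  define p where "p = (SOME r. r \<in> trace_of dX p0)"
  define q where "q = (SOME r. r \<in> trace_of dX q0)"
  have pt: "p \<in> trace_of dX p0" unfolding p_def by (rule some_in_trace[OF p0])
  have qt: "q \<in> trace_of dX q0" unfolding q_def by (rule some_in_trace[OF q0])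
  have pe: "equivclp (reparam_rel dX) p0 p" and qe: "equivclp (reparam_rel dX) q0 q"
    using pt qt unfolding trace_of_def by auto
  have p: "p \<in> dX" "p 1 = p0 1" using trace_mem_ends[OF d p0 pt] by auto
  have "equivclp (reparam_rel dX) (path_concat p0 q0) (path_concat p q0)"
    by (rule eqvL[OF d pe p0 q0 e])
  also have "equivclp (reparam_rel dX) (path_concat p q0) (path_concat p q)"
    by (rule eqvR[OF d qe p(1) q0]) (use p e in simp)
  finally have "trace_of dX (path_concat p0 q0) = trace_of dX (path_concat p q)"
    by (rule trace_of_eq)
  then show ?thesis unfolding trace_concat_def p_def q_def by simp
qed

lemma traces_E:
  assumes "t \<in> traces dX"
  obtains p where "p \<in> dX" "t = trace_of dX p"
  using assms unfolding traces_def by blast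

lemma tc_trace:
  assumes d: "dspace X dX" and s: "s \<in> traces dX" and t: "t \<in> traces dX"
    and e: "trace_tgt s = trace_src t"
  shows "trace_concat dX s t \<in> traces dX \<and> trace_src (trace_concat dX s t) = trace_src s
     \<and> trace_tgt (trace_concat dX s t) = trace_tgt t"
proof -
  obtain p where p: "p \<in> dX" "s = trace_of dX p" using s by (rule traces_E)
  obtain q where q: "q \<in> dX" "t = trace_of dX q" using t by (rule traces_E)
  have pq: "p 1 = q 0" using e p q trace_src_of[OF d] trace_tgt_of[OF d] by auto
  have c: "path_concat p q \<in> dX" by (rule concat_in[OF d p(1) q(1) pq])
  have tc: "trace_concat dX s t = trace_of dX (path_concat p q)"
    using tc_rep[OF d p(1) q(1) pq] p q by simp
  have e0: "path_concat p q 0 = p 0" "path_concat p q 1 = q 1"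
    by (auto simp: path_concat_def)
  have "trace_concat dX s t \<in> traces dX" unfolding traces_def using tc c by blast
  moreover have "trace_src (trace_concat dX s t) = trace_src s"
    using tc trace_src_of[OF d c] trace_src_of[OF d p(1)] p(2) e0 by simp
  moreover have "trace_tgt (trace_concat dX s t) = trace_tgt t"
    using tc trace_tgt_of[OF d c] trace_tgt_of[OF d q(1)] q(2) e0 by simp
  ultimately show ?thesis by blast
qed

lemma istopology_quot:
  "istopology (\<lambda>U. U \<subseteq> q ` topspace T \<and> openin T {x \<in> topspace T. q x \<in> U})"
proof -
  have i: "\<And>S U. {x\<in>topspace T. q x \<in> S \<inter> U} = {x\<in>topspace T. q x \<in> S} \<inter> {x\<in>topspace T. q x \<in> U}"
    by auto
  have u: "\<And>K. {x \<in> topspace T. q x \<in> \<Union>K} = (\<Union>U\<in>K. {x\<in>topspace T. q x \<in> U})" by auto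
  show ?thesis unfolding istopology_def i u by (auto intro!: openin_Union)
qed

lemma openin_quot:
  "openin (quotient_topology T q) U \<longleftrightarrow> U \<subseteq> q ` topspace T \<and> openin T {x \<in> topspace T. q x \<in> U}"
  unfolding quotient_topology_def by (simp add: topology_inverse'[OF istopology_quot])

lemma topspace_quot: "topspace (quotient_topology T q) = q ` topspace T"
proof -
  have "{x\<in>topspace T. q x \<in> q ` topspace T} = topspace T" by auto
  then have "openin (quotient_topology T q) (q ` topspace T)"
    unfolding openin_quot by simp
  moreover have "topspace (quotient_topology T q) \<subseteq> q ` topspace T"
    using openin_topspace[of "quotient_topology T q"] unfolding openin_quot by blast
  ultimately show ?thesis using openin_subset by blast
qed

lemma topspace_CO: "topspace (compact_open_topology X P) = P"
proof -
  have "P \<in> {{p \<in> P. p ` K \<subseteq> U} | K U. compactin unit_interval K \<and> openin X U}"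
    by (rule CollectI, rule exI[of _ "{}"], rule exI[of _ "topspace X"]) auto
  then show ?thesis unfolding compact_open_topology_def topology_generated_by_topspace
    by (intro subset_antisym) blast+
qed

definition pmap :: "('a \<Rightarrow> 'b) \<Rightarrow> (real \<Rightarrow> 'a) \<Rightarrow> real \<Rightarrow> 'b" where
  "pmap f p = restrict (f \<circ> p) {0..1}"

definition tmap :: "('a \<Rightarrow> 'b) \<Rightarrow> (real \<Rightarrow> 'a) set \<Rightarrow> (real \<Rightarrow> 'b) set" where
  "tmap f t = pmap f ` t"

lemma pmap_concat: "pmap f (path_concat p q) = path_concat (pmap f p) (pmap f q)"
proof
  fix t :: real
  show "pmap f (path_concat p q) t = path_concat (pmap f p) (pmap f q) t"
    by (cases "t \<in> {0..1}"; cases "t \<le> 1/2") (auto simp: pmap_def path_concat_def)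
qed

lemma pmap_reparam:
  assumes "reparametrization \<phi>"
  shows "pmap f (reparam p \<phi>) = reparam (pmap f p) \<phi>"
proof
  fix t :: real
  show "pmap f (reparam p \<phi>) t = reparam (pmap f p) \<phi> t"
  proof (cases "t \<in> {0..1}")
    case True
    then have "\<phi> t \<in> {0..1}" by (rule reparam_range[OF assms])
    then show ?thesis using True by (simp add: pmap_def reparam_def)
  qed (simp add: pmap_def reparam_def del: atLeastAtMost_iff)
qed

lemma path_in_topspace:
  assumes "dspace X dX" "p \<in> dX" "t \<in> {0..1}"
  shows "p t \<in> topspace X"
proof -
  have "continuous_map unit_interval X p" using assms unfolding dspace_def is_path_in_def by blast
  then show ?thesis using assms(3) continuous_map_image_subset_topspace
    unfolding unit_interval_def by fastforce
qed

lemma path_ext: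
  assumes "dspace X dX" "p \<in> dX"
  shows "p \<in> extensional {0..1}"
  using assms unfolding dspace_def is_path_in_def by blast

locale dhomeo =
  fixes X :: "'a topology" and dX and Y :: "'b topology" and dY and f and g
  assumes dX: "dspace X dX" and dY: "dspace Y dY"
    and mf: "dmap X dX Y dY f" and mg: "dmap Y dY X dX g"
    and gf: "\<forall>x\<in>topspace X. g (f x) = x" and fg: "\<forall>y\<in>topspace Y. f (g y) = y"
begin

lemma sym: "dhomeo Y dY X dX g f"
  using dX dY mf mg gf fg by (simp add: dhomeo_def)

lemma pmap_in: "p \<in> dX \<Longrightarrow> pmap f p \<in> dY"
  using mf unfolding dmap_def pmap_def by blast

lemma pmap_inv: "p \<in> dX \<Longrightarrow> pmap g (pmap f p) = p"
proof
  fix t assume p: "p \<in> dX"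
  show "pmap g (pmap f p) t = p t"
  proof (cases "t \<in> {0..1}")
    case True
    then show ?thesis using gf path_in_topspace[OF dX p True] by (simp add: pmap_def)
  next
    case False
    then show ?thesis using path_ext[OF dX p] by (simp add: pmap_def extensional_def del: atLeastAtMost_iff)
  qed
qed

lemma rr_map: "reparam_rel dX p q \<Longrightarrow> reparam_rel dY (pmap f p) (pmap f q)"
  unfolding reparam_rel_def using pmap_in pmap_reparam by metis

lemma eqv_map: "equivclp (reparam_rel dX) p q \<Longrightarrow> equivclp (reparam_rel dY) (pmap f p) (pmap f q)"
proof (induction rule: equivclp_induct)
  case base
  then show ?case by simp
next
  case (step y z)
  then show ?case using rr_map equivclp_into_equivclp by metis
qed

lemma tmap_trace_of:
  assumes p: "p \<in> dX"
  shows "tmap f (trace_of dX p) = trace_of dY (pmap f p)"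
proof
  show "tmap f (trace_of dX p) \<subseteq> trace_of dY (pmap f p)"
    unfolding tmap_def trace_of_def using pmap_in eqv_map by blast
next
  interpret s: dhomeo Y dY X dX g f by (rule sym)
  show "trace_of dY (pmap f p) \<subseteq> tmap f (trace_of dX p)"
  proof
    fix q' assume q': "q' \<in> trace_of dY (pmap f p)"
    then have q'Y: "q' \<in> dY" and e: "equivclp (reparam_rel dY) (pmap f p) q'"
      unfolding trace_of_def by auto
    have "equivclp (reparam_rel dX) (pmap g (pmap f p)) (pmap g q')" by (rule s.eqv_map[OF e])
    then have "equivclp (reparam_rel dX) p (pmap g q')" using pmap_inv[OF p] by simp
    then have "pmap g q' \<in> trace_of dX p" using s.pmap_in[OF q'Y] unfolding trace_of_def by simp
    moreover have "pmap f (pmap g q') = q'" by (rule s.pmap_inv[OF q'Y])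
    ultimately show "q' \<in> tmap f (trace_of dX p)" unfolding tmap_def by force
  qed
qed

lemma tmap_traces: "t \<in> traces dX \<Longrightarrow> tmap f t \<in> traces dY"
  using tmap_trace_of pmap_in unfolding traces_def by auto

lemma tmap_inv: "t \<in> traces dX \<Longrightarrow> tmap g (tmap f t) = t"
proof -
  assume t: "t \<in> traces dX"
  then have "t \<subseteq> dX" unfolding traces_def trace_of_def by auto
  then have "\<forall>x\<in>t. pmap g (pmap f x) = x" using pmap_inv by blast
  then show ?thesis unfolding tmap_def image_image by (metis (no_types, lifting) image_cong image_ident)
qed

lemma tmap_src: "t \<in> traces dX \<Longrightarrow> trace_src (tmap f t) = f (trace_src t)"
proof (erule traces_E)
  fix p assume p: "p \<in> dX" "t = trace_of dX p"
  have "trace_src (tmap f t) = pmap f p 0"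
    using p tmap_trace_of trace_src_of[OF dY pmap_in[OF p(1)]] by simp
  also have "\<dots> = f (p 0)" by (simp add: pmap_def)
  finally show ?thesis using p trace_src_of[OF dX] by simp
qed

lemma tmap_tgt: "t \<in> traces dX \<Longrightarrow> trace_tgt (tmap f t) = f (trace_tgt t)"
proof (erule traces_E)
  fix p assume p: "p \<in> dX" "t = trace_of dX p"
  have "trace_tgt (tmap f t) = pmap f p 1"
    using p tmap_trace_of trace_tgt_of[OF dY pmap_in[OF p(1)]] by simp
  also have "\<dots> = f (p 1)" by (simp add: pmap_def)
  finally show ?thesis using p trace_tgt_of[OF dX] by simp
qed

lemma tmap_concat:
  assumes s: "s \<in> traces dX" and t: "t \<in> traces dX" and e: "trace_tgt s = trace_src t"
  shows "tmap f (trace_concat dX s t) = trace_concat dY (tmap f s) (tmap f t)"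
proof -
  obtain p where p: "p \<in> dX" "s = trace_of dX p" using s by (rule traces_E)
  obtain q where q: "q \<in> dX" "t = trace_of dX q" using t by (rule traces_E)
  have pq: "p 1 = q 0" using e p q trace_src_of[OF dX] trace_tgt_of[OF dX] by auto
  have pq': "pmap f p 1 = pmap f q 0" using pq by (simp add: pmap_def)
  have "tmap f (trace_concat dX s t) = tmap f (trace_of dX (path_concat p q))"
    using tc_rep[OF dX p(1) q(1) pq] p q by simp
  also have "\<dots> = trace_of dY (pmap f (path_concat p q))"
    by (rule tmap_trace_of[OF concat_in[OF dX p(1) q(1) pq]])
  also have "\<dots> = trace_of dY (path_concat (pmap f p) (pmap f q))" by (simp add: pmap_concat)
  also have "\<dots> = trace_concat dY (trace_of dY (pmap f p)) (trace_of dY (pmap f q))"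
    using tc_rep[OF dY pmap_in[OF p(1)] pmap_in[OF q(1)] pq'] by simp
  also have "\<dots> = trace_concat dY (tmap f s) (tmap f t)"
    using p q tmap_trace_of by simp
  finally show ?thesis .
qed

lemma fact_hom_map:
  assumes a: "a \<in> traces dX" and uv: "(u, v) \<in> fact_hom dX a a'"
  shows "(tmap f u, tmap f v) \<in> fact_hom dY (tmap f a) (tmap f a')"
proof -
  have u: "u \<in> traces dX" and v: "v \<in> traces dX" and e1: "trace_tgt u = trace_src a"
    and e2: "trace_tgt a = trace_src v" and eq: "trace_concat dX (trace_concat dX u a) v = a'"
    using uv unfolding fact_hom_def by auto
  have ua: "trace_concat dX u a \<in> traces dX" "trace_tgt (trace_concat dX u a) = trace_tgt a"
    using tc_trace[OF dX u a e1] by auto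
  have "tmap f a' = tmap f (trace_concat dX (trace_concat dX u a) v)" using eq by simp
  also have "\<dots> = trace_concat dY (tmap f (trace_concat dX u a)) (tmap f v)"
    using tmap_concat[OF ua(1) v] ua(2) e2 by simp
  also have "\<dots> = trace_concat dY (trace_concat dY (tmap f u) (tmap f a)) (tmap f v)"
    using tmap_concat[OF u a e1] by simp
  finally show ?thesis unfolding fact_hom_def
    using tmap_traces[OF u] tmap_traces[OF v] tmap_src tmap_tgt u v a e1 e2 by auto
qed

lemma dipaths_map:
  assumes "x \<in> topspace X" "y \<in> topspace X"
  shows "dipaths_from_to dY (f x) (f y) = pmap f ` dipaths_from_to dX x y"
proof
  interpret s: dhomeo Y dY X dX g f by (rule sym)
  show "pmap f ` dipaths_from_to dX x y \<subseteq> dipaths_from_to dY (f x) (f y)"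
    unfolding dipaths_from_to_def using pmap_in by (auto simp: pmap_def)
  show "dipaths_from_to dY (f x) (f y) \<subseteq> pmap f ` dipaths_from_to dX x y"
  proof
    fix p' assume "p' \<in> dipaths_from_to dY (f x) (f y)"
    then have p': "p' \<in> dY" "p' 0 = f x" "p' 1 = f y" unfolding dipaths_from_to_def by auto
    have "pmap g p' \<in> dipaths_from_to dX x y"
      using s.pmap_in[OF p'(1)] p' gf assms unfolding dipaths_from_to_def by (auto simp: pmap_def)
    moreover have "p' = pmap f (pmap g p')" using s.pmap_inv[OF p'(1)] by simp
    ultimately show "p' \<in> pmap f ` dipaths_from_to dX x y" by blast
  qed
qed

end

lemma topspace_TS: "topspace (trace_space X dX x y) = trace_of dX ` dipaths_from_to dX x y"
  unfolding trace_space_def by (simp add: topspace_quot topspace_CO)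

lemma compactin_unit_sub: "compactin unit_interval K \<Longrightarrow> K \<subseteq> {0..1}"
  using compactin_subset_topspace unfolding unit_interval_def by fastforce

context dhomeo
begin

lemma CO_cont:
  assumes P: "P \<subseteq> dX"
  shows "continuous_map (compact_open_topology X P) (compact_open_topology Y (pmap f ` P)) (pmap f)"
proof -
  define S' where "S' = {{p \<in> pmap f ` P. p ` K \<subseteq> U} | K U. compactin unit_interval K \<and> openin Y U}"
  have eq: "compact_open_topology Y (pmap f ` P) = topology_generated_by S'"
    unfolding S'_def compact_open_topology_def by simp
  have cf: "continuous_map X Y f" using mf unfolding dmap_def by blast
  show ?thesis unfolding eq
  proof (rule continuous_on_generated_topo)
    fix U assume "U \<in> S'"
    then obtain K V where U: "U = {p \<in> pmap f ` P. p ` K \<subseteq> V}" and K: "compactin unit_interval K"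
      and V: "openin Y V" unfolding S'_def by blast
    define W where "W = {x \<in> topspace X. f x \<in> V}"
    have W: "openin X W" unfolding W_def by (rule openin_continuous_map_preimage[OF cf V])
    have Ks: "K \<subseteq> {0..1}" by (rule compactin_unit_sub[OF K])
    have "pmap f -` U \<inter> topspace (compact_open_topology X P) = {p \<in> P. p ` K \<subseteq> W}"
    proof -
      have "p ` K \<subseteq> W \<longleftrightarrow> pmap f p ` K \<subseteq> V" if p: "p \<in> P" for p
      proof -
        have "\<And>t. t \<in> K \<Longrightarrow> p t \<in> topspace X" using path_in_topspace[OF dX] p P Ks by blast
        moreover have "\<And>t. t \<in> K \<Longrightarrow> pmap f p t = f (p t)" using Ks by (auto simp: pmap_def)
        ultimately show ?thesis unfolding W_def by auto
      qed
      then show ?thesis unfolding U topspace_CO by auto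
    qed
    moreover have "openin (compact_open_topology X P) {p \<in> P. p ` K \<subseteq> W}"
      unfolding compact_open_topology_def
      by (rule topology_generated_by_Basis) (use K W in blast)
    ultimately show "openin (compact_open_topology X P) (pmap f -` U \<inter> topspace (compact_open_topology X P))"
      by simp
  next
    show "pmap f ` topspace (compact_open_topology X P) \<subseteq> \<Union> S'"
      using topspace_CO[of Y "pmap f ` P"] unfolding eq topology_generated_by_topspace topspace_CO
      by simp
  qed
qed

lemma Q_cont:
  assumes P: "P \<subseteq> dX"
  shows "continuous_map (quotient_topology (compact_open_topology X P) (trace_of dX))
           (quotient_topology (compact_open_topology Y (pmap f ` P)) (trace_of dY)) (tmap f)"
  unfolding continuous_map_def
proof (intro conjI allI impI)
  show "tmap f \<in> topspace (quotient_topology (compact_open_topology X P) (trace_of dX)) \<rightarrow>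
        topspace (quotient_topology (compact_open_topology Y (pmap f ` P)) (trace_of dY))"
    unfolding topspace_quot topspace_CO using tmap_trace_of P by auto
next
  fix V assume "openin (quotient_topology (compact_open_topology Y (pmap f ` P)) (trace_of dY)) V"
  then have V: "V \<subseteq> trace_of dY ` pmap f ` P"
    and Vo: "openin (compact_open_topology Y (pmap f ` P)) {x \<in> pmap f ` P. trace_of dY x \<in> V}"
    unfolding openin_quot topspace_CO by auto
  define W where "W = {t \<in> topspace (quotient_topology (compact_open_topology X P) (trace_of dX)). tmap f t \<in> V}"
  have "{p \<in> P. trace_of dX p \<in> W} = {p \<in> topspace (compact_open_topology X P). pmap f p \<in> {x \<in> pmap f ` P. trace_of dY x \<in> V}}"
  proof -
    have tm: "\<And>p. p \<in> P \<Longrightarrow> tmap f (trace_of dX p) = trace_of dY (pmap f p)"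
      using P tmap_trace_of by auto
    show ?thesis unfolding W_def topspace_quot topspace_CO by (auto simp: tm)
  qed
  then have "openin (compact_open_topology X P) {p \<in> P. trace_of dX p \<in> W}"
    using openin_continuous_map_preimage[OF CO_cont[OF P] Vo] by simp
  moreover have "W \<subseteq> trace_of dX ` P" unfolding W_def topspace_quot topspace_CO by auto
  ultimately have "openin (quotient_topology (compact_open_topology X P) (trace_of dX)) W"
    unfolding openin_quot topspace_CO by simp
  then show "openin (quotient_topology (compact_open_topology X P) (trace_of dX)) 
     {x \<in> topspace (quotient_topology (compact_open_topology X P) (trace_of dX)). tmap f x \<in> V}"
    unfolding W_def .
qed

end

lemma (in dhomeo) Q_homeo:
  assumes P: "P \<subseteq> dX"
  shows "homeomorphic_maps (quotient_topology (compact_open_topology X P) (trace_of dX))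
           (quotient_topology (compact_open_topology Y (pmap f ` P)) (trace_of dY)) (tmap f) (tmap g)"
proof -
  interpret s: dhomeo Y dY X dX g f by (rule sym)
  have P': "pmap f ` P \<subseteq> dY" using P pmap_in by auto
  have PP: "pmap g ` pmap f ` P = P" using P pmap_inv by (force simp: image_image)
  have c2: "continuous_map (quotient_topology (compact_open_topology Y (pmap f ` P)) (trace_of dY))
           (quotient_topology (compact_open_topology X P) (trace_of dX)) (tmap g)"
    using s.Q_cont[OF P'] unfolding PP .
  have i1: "tmap g (tmap f t) = t" if "t \<in> topspace (quotient_topology (compact_open_topology X P) (trace_of dX))" for t
    using that P unfolding topspace_quot topspace_CO traces_def by (auto intro!: tmap_inv simp: traces_def)
  have i2: "tmap f (tmap g t) = t" if "t \<in> topspace (quotient_topology (compact_open_topology Y (pmap f ` P)) (trace_of dY))" for t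
    using that P' unfolding topspace_quot topspace_CO traces_def by (auto intro!: s.tmap_inv simp: traces_def)
  show ?thesis unfolding homeomorphic_maps_def using Q_cont[OF P] c2 i1 i2 by blast
qed

lemma (in dhomeo) TS_homeo:
  assumes "x \<in> topspace X" "y \<in> topspace X"
  shows "homeomorphic_maps (trace_space X dX x y) (trace_space Y dY (f x) (f y)) (tmap f) (tmap g)"
  unfolding trace_space_def dipaths_map[OF assms]
  by (rule Q_homeo) (auto simp: dipaths_from_to_def)

lemma (in dhomeo) src_top: "a \<in> traces dX \<Longrightarrow> trace_src a \<in> topspace X \<and> trace_tgt a \<in> topspace X"
  by (auto elim!: traces_E simp: trace_src_of[OF dX] trace_tgt_of[OF dX] path_in_topspace[OF dX])

lemma (in dhomeo) TS_top:
  assumes "h \<in> topspace (trace_space X dX x y)"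
  shows "h \<in> traces dX \<and> trace_src h = x \<and> trace_tgt h = y"
  using assms unfolding topspace_TS traces_def dipaths_from_to_def
  by (auto simp: trace_src_of[OF dX] trace_tgt_of[OF dX])

definition (in dhomeo) eta :: "nat \<Rightarrow> (real \<Rightarrow> 'a) set \<Rightarrow> _" where
  "eta n a = hom_induced (int n - 1) (trace_space X dX (trace_src a) (trace_tgt a)) {}
      (trace_space Y dY (trace_src (tmap f a)) (trace_tgt (tmap f a))) {} (tmap f)"

lemma (in dhomeo) eta_iso:
  assumes a: "a \<in> traces dX"
  shows "eta n a \<in> iso (nat_hom_obj n X dX a) (nat_hom_obj n Y dY (tmap f a))"
proof -
  have "homeomorphic_map (trace_space X dX (trace_src a) (trace_tgt a))
      (trace_space Y dY (trace_src (tmap f a)) (trace_tgt (tmap f a))) (tmap f)"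
    using TS_homeo[of "trace_src a" "trace_tgt a"] src_top[OF a] tmap_src[OF a] tmap_tgt[OF a]
    homeomorphic_map_maps by metis
  then show ?thesis unfolding eta_def nat_hom_obj_def by (rule homeomorphic_map_homology_iso)
qed

lemma (in dhomeo) comm:
  assumes a: "a \<in> traces dX" and a': "a' \<in> traces dX" and uv: "(u, v) \<in> fact_hom dX a a'"
  shows "eta n a' (nat_hom_mor n X dX a a' (u, v) c) =
         nat_hom_mor n Y dY (tmap f a) (tmap f a') (tmap f u, tmap f v) (eta n a c)"
proof -
  interpret s: dhomeo Y dY X dX g f by (rule sym)
  define x where "x = trace_src a"
  define y where "y = trace_tgt a"
  define x' where "x' = trace_src a'"
  define y' where "y' = trace_tgt a'"
  define TA where "TA = trace_space X dX x y"
  define TA' where "TA' = trace_space X dX x' y'"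
  define TB where "TB = trace_space Y dY (f x) (f y)"
  define TB' where "TB' = trace_space Y dY (f x') (f y')"
  define ci where "ci = (\<lambda>h. trace_concat dX (trace_concat dX u h) v)"
  define cj where "cj = (\<lambda>h. trace_concat dY (trace_concat dY (tmap f u) h) (tmap f v))"
  define p where "p = int n - 1"
  have u: "u \<in> traces dX" and v: "v \<in> traces dX" and e1: "trace_tgt u = x"
    and e2: "y = trace_src v"
    using uv unfolding fact_hom_def x_def y_def by auto
  have hA: "homeomorphic_maps TA TB (tmap f) (tmap g)"
    unfolding TA_def TB_def using TS_homeo src_top[OF a] x_def y_def by blast
  have hA': "homeomorphic_maps TA' TB' (tmap f) (tmap g)"
    unfolding TA'_def TB'_def using TS_homeo src_top[OF a'] x'_def y'_def by blast
  have claim: "ci h \<in> traces dX \<and> tmap f (ci h) = cj (tmap f h)" if h: "h \<in> topspace TA" for h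
  proof -
    have h1: "h \<in> traces dX" "trace_src h = x" "trace_tgt h = y"
      using TS_top[of h x y] h unfolding TA_def by auto
    have uh: "trace_concat dX u h \<in> traces dX" "trace_tgt (trace_concat dX u h) = y"
      using tc_trace[OF dX u h1(1)] e1 h1 by auto
    have "ci h \<in> traces dX" unfolding ci_def using tc_trace[OF dX uh(1) v] uh(2) e2 by auto
    moreover have "tmap f (ci h) = cj (tmap f h)"
      unfolding ci_def cj_def
      using tmap_concat[OF uh(1) v] uh(2) e2 tmap_concat[OF u h1(1)] e1 h1 by simp
    ultimately show ?thesis by blast
  qed
  have eqA: "eta n a = hom_induced p TA {} TB {} (tmap f)"
    unfolding eta_def p_def TA_def TB_def x_def y_def using tmap_src[OF a] tmap_tgt[OF a] by simp
  have eqA': "eta n a' = hom_induced p TA' {} TB' {} (tmap f)"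
    unfolding eta_def p_def TA'_def TB'_def x'_def y'_def using tmap_src[OF a'] tmap_tgt[OF a'] by simp
  have eqF: "nat_hom_mor n X dX a a' (u, v) = hom_induced p TA {} TA' {} ci"
    unfolding nat_hom_mor_def p_def TA_def TA'_def ci_def x_def y_def x'_def y'_def by simp
  have eqG: "nat_hom_mor n Y dY (tmap f a) (tmap f a') (tmap f u, tmap f v) = hom_induced p TB {} TB' {} cj"
    unfolding nat_hom_mor_def p_def TB_def TB'_def cj_def x_def y_def x'_def y'_def
    using tmap_src[OF a] tmap_tgt[OF a] tmap_src[OF a'] tmap_tgt[OF a'] by simp
  have cfA: "continuous_map TA TB (tmap f)" and cgA: "continuous_map TB TA (tmap g)"
    and iA1: "\<And>h. h \<in> topspace TA \<Longrightarrow> tmap g (tmap f h) = h"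
    and iA2: "\<And>h. h \<in> topspace TB \<Longrightarrow> tmap f (tmap g h) = h"
    using hA unfolding homeomorphic_maps_def by auto
  have cfA': "continuous_map TA' TB' (tmap f)" and cgA': "continuous_map TB' TA' (tmap g)"
    using hA' unfolding homeomorphic_maps_def by auto
  have cont_iff: "continuous_map TA TA' ci \<longleftrightarrow> continuous_map TB TB' cj"
  proof
    assume ci: "continuous_map TA TA' ci"
    have "continuous_map TB TB' (tmap f \<circ> ci \<circ> tmap g)"
      using continuous_map_compose[OF continuous_map_compose[OF cgA ci] cfA'] by (simp add: o_assoc)
    then show "continuous_map TB TB' cj"
    proof (rule continuous_map_eq)
      fix h' assume h': "h' \<in> topspace TB"
      have "tmap g h' \<in> topspace TA" using cgA h' by (simp add: continuous_map_def Pi_iff)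
      then show "(tmap f \<circ> ci \<circ> tmap g) h' = cj h'" using claim iA2[OF h'] by simp
    qed
  next
    assume cj: "continuous_map TB TB' cj"
    have "continuous_map TA TA' (tmap g \<circ> cj \<circ> tmap f)"
      using continuous_map_compose[OF continuous_map_compose[OF cfA cj] cgA'] by (simp add: o_assoc)
    then show "continuous_map TA TA' ci"
    proof (rule continuous_map_eq)
      fix h assume h: "h \<in> topspace TA"
      show "(tmap g \<circ> cj \<circ> tmap f) h = ci h" using claim[OF h] tmap_inv by force
    qed
  qed
  show ?thesis
  proof (cases "continuous_map TA TA' ci")
    case True
    then have cj: "continuous_map TB TB' cj" using cont_iff by simp
    have "hom_induced p TA' {} TB' {} (tmap f) (hom_induced p TA {} TA' {} ci c)
        = hom_induced p TA {} TB' {} (tmap f \<circ> ci) c"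
      by (rule hom_induced_compose'[OF True _ cfA']) auto
    also have "\<dots> = hom_induced p TA {} TB' {} (cj \<circ> tmap f) c"
      by (rule arg_cong[where f="\<lambda>F. F c"], rule hom_induced_eq) (use claim in simp)
    also have "\<dots> = hom_induced p TB {} TB' {} cj (hom_induced p TA {} TB {} (tmap f) c)"
      by (rule hom_induced_compose'[OF cfA _ cj, symmetric]) auto
    finally show ?thesis unfolding eqA eqA' eqF eqG .
  next
    case False
    then have cj: "\<not> continuous_map TB TB' cj" using cont_iff by simp
    have "hom_induced p TA {} TA' {} ci c = one (relative_homology_group p TA' {})"
      using False by (intro hom_induced_default) simp
    then have "hom_induced p TA' {} TB' {} (tmap f) (hom_induced p TA {} TA' {} ci c)
        = one (relative_homology_group p TB' {})"
      using hom_one[OF hom_induced_hom] by simp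
    also have "\<dots> = hom_induced p TB {} TB' {} cj (hom_induced p TA {} TB {} (tmap f) c)"
      using cj by (intro hom_induced_default[symmetric]) simp
    finally show ?thesis unfolding eqA eqA' eqF eqG .
  qed
qed

lemma (in dhomeo) main:
  "bisim_equivalent
           (traces dX) (fact_hom dX) (nat_hom_obj n X dX) (nat_hom_mor n X dX)
           (traces dY) (fact_hom dY) (nat_hom_obj n Y dY) (nat_hom_mor n Y dY)"
proof -
  interpret s: dhomeo Y dY X dX g f by (rule sym)
  define R where "R = (\<lambda>a. (a, eta n a, tmap f a)) ` traces dX"
  have c1: "\<forall>(a, \<eta>, b) \<in> R. a \<in> traces dX \<and> b \<in> traces dY \<and> \<eta> \<in> iso (nat_hom_obj n X dX a) (nat_hom_obj n Y dY b)"
    unfolding R_def using tmap_traces eta_iso by auto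
  have c2: "\<forall>a\<in>traces dX. \<exists>\<eta> b. (a, \<eta>, b) \<in> R" unfolding R_def by blast
  have c3: "\<forall>b\<in>traces dY. \<exists>a \<eta>. (a, \<eta>, b) \<in> R"
  proof
    fix b assume b: "b \<in> traces dY"
    have "(tmap g b, eta n (tmap g b), tmap f (tmap g b)) \<in> R"
      unfolding R_def using s.tmap_traces[OF b] by blast
    then show "\<exists>a \<eta>. (a, \<eta>, b) \<in> R" using s.tmap_inv[OF b] by auto
  qed
  have c4: "\<forall>(a, \<eta>, b) \<in> R. \<forall>a'\<in>traces dX. \<forall>i\<in>fact_hom dX a a'.
        \<exists>\<eta>' b' j. (a', \<eta>', b') \<in> R \<and> j \<in> fact_hom dY b b' \<and>
          (\<forall>c\<in>carrier (nat_hom_obj n X dX a). \<eta>' (nat_hom_mor n X dX a a' i c) = nat_hom_mor n Y dY b b' j (\<eta> c))"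
  proof -
    have "\<exists>\<eta>' b' j. (a', \<eta>', b') \<in> R \<and> j \<in> fact_hom dY (tmap f a) b' \<and>
          (\<forall>c\<in>carrier (nat_hom_obj n X dX a). \<eta>' (nat_hom_mor n X dX a a' i c) = nat_hom_mor n Y dY (tmap f a) b' j (eta n a c))"
      if a: "a \<in> traces dX" and a': "a' \<in> traces dX" and i: "i \<in> fact_hom dX a a'" for a a' i
    proof -
      obtain u v where uv: "i = (u, v)" by (cases i)
      have "(a', eta n a', tmap f a') \<in> R" unfolding R_def using a' by blast
      moreover have "(tmap f u, tmap f v) \<in> fact_hom dY (tmap f a) (tmap f a')"
        using fact_hom_map[OF a] i uv by simp
      moreover have "\<forall>c\<in>carrier (nat_hom_obj n X dX a). eta n a' (nat_hom_mor n X dX a a' i c)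
          = nat_hom_mor n Y dY (tmap f a) (tmap f a') (tmap f u, tmap f v) (eta n a c)"
        using comm[OF a a'] i uv by simp
      ultimately show ?thesis by blast
    qed
    then show ?thesis unfolding R_def by auto
  qed
  have c5: "\<forall>(a, \<eta>, b) \<in> R. \<forall>b'\<in>traces dY. \<forall>j\<in>fact_hom dY b b'.
        \<exists>\<eta>' a' i. (a', \<eta>', b') \<in> R \<and> i \<in> fact_hom dX a a' \<and>
          (\<forall>c\<in>carrier (nat_hom_obj n X dX a). \<eta>' (nat_hom_mor n X dX a a' i c) = nat_hom_mor n Y dY b b' j (\<eta> c))"
  proof -
    have "\<exists>\<eta>' a' i. (a', \<eta>', b') \<in> R \<and> i \<in> fact_hom dX a a' \<and>
          (\<forall>c\<in>carrier (nat_hom_obj n X dX a). \<eta>' (nat_hom_mor n X dX a a' i c) = nat_hom_mor n Y dY (tmap f a) b' j (eta n a c))"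
      if a: "a \<in> traces dX" and b': "b' \<in> traces dY" and j: "j \<in> fact_hom dY (tmap f a) b'" for a b' j
    proof -
      obtain u' v' where uv: "j = (u', v')" by (cases j)
      have u': "u' \<in> traces dY" and v': "v' \<in> traces dY" using j uv unfolding fact_hom_def by auto
      define a' where "a' = tmap g b'"
      have a': "a' \<in> traces dX" unfolding a'_def by (rule s.tmap_traces[OF b'])
      have fa': "tmap f a' = b'" unfolding a'_def by (rule s.tmap_inv[OF b'])
      have "(tmap g u', tmap g v') \<in> fact_hom dX (tmap g (tmap f a)) (tmap g b')"
        using s.fact_hom_map[OF tmap_traces[OF a]] j uv by simp
      then have i: "(tmap g u', tmap g v') \<in> fact_hom dX a a'" using tmap_inv[OF a] a'_def by simp
      have "(a', eta n a', b') \<in> R" unfolding R_def using a' fa' by force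
      moreover have "\<forall>c\<in>carrier (nat_hom_obj n X dX a). eta n a' (nat_hom_mor n X dX a a' (tmap g u', tmap g v') c)
          = nat_hom_mor n Y dY (tmap f a) b' j (eta n a c)"
        using comm[OF a a' i] fa' uv s.tmap_inv[OF u'] s.tmap_inv[OF v'] by simp
      ultimately show ?thesis using i by blast
    qed
    then show ?thesis unfolding R_def by auto
  qed
  have "bisimulation (traces dX) (fact_hom dX) (nat_hom_obj n X dX) (nat_hom_mor n X dX)
           (traces dY) (fact_hom dY) (nat_hom_obj n Y dY) (nat_hom_mor n Y dY) R"
    unfolding bisimulation_def using c1 c2 c3 c4 c5 by blast
  then show ?thesis unfolding bisim_equivalent_def by blast
qed

theorem lemma4p1:
  fixes X :: "'a topology" and dX :: "(real \<Rightarrow> 'a) set"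
    and Y :: "'b topology" and dY :: "(real \<Rightarrow> 'b) set"
    and f :: "'a \<Rightarrow> 'b" and g :: "'b \<Rightarrow> 'a" and n :: nat
  assumes "dspace X dX" and "dspace Y dY"
    and "dmap X dX Y dY f" and "dmap Y dY X dX g"
    and "\<forall>x\<in>topspace X. g (f x) = x" and "\<forall>y\<in>topspace Y. f (g y) = y"
    and "n \<ge> 1"
  shows "bisim_equivalent
           (traces dX) (fact_hom dX) (nat_hom_obj n X dX) (nat_hom_mor n X dX)
           (traces dY) (fact_hom dY) (nat_hom_obj n Y dY) (nat_hom_mor n Y dY)"
proof -
  interpret dhomeo X dX Y dY f g using assms by (simp add: dhomeo_def)
  show ?thesis by (rule main)
qed

end
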